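(* Let $f:\mathcal{X}\to\mathbb{R}^K$ be a classifier and let $g:\mathcal{X}\to[0,\sqrt{\pi/2}]$ be the local robustness score $g(x)=\sqrt{\pi/2}\cdot\max\{\sigma(f(x))_{y}-\max_{j\neq y}\sigma(f(x))_j,\,0\}$, where $y$ is the ground-truth label of $x$ and $\sigma$ is a sigmoid or temperature-scaled softmax activation with values in $[0,1]$. For each class $k\in\{1,\dots,K\}$, let $x_1^{(k)},\dots,x_{n_k}^{(k)}$ be $n_k\ge1$ i.i.d. samples from the class-conditional distribution of class $k$, let $\Omega_k=\mathbb{E}[g(x)\mid y=k]$ and $\hat{\Omega}_k=\frac{1}{n_k}\sum_{i=1}^{n_k} g(x_i^{(k)})$. Define the population and empirical Robustness Disparity Indices $\mathrm{RDI}=\max_k\Omega_k-\min_k\Omega_k$ and $\widehat{\mathrm{RDI}}=\max_k\hat{\Omega}_k-\min_k\hat{\Omega}_k$, and let $n_{\min}=\min_k n_k$. Then for every $\delta\in(0,1)$, with probability at least $1-\delta$, $$|\widehat{\mathrm{RDI}}-\mathrm{RDI}|\le 2\sqrt{\frac{\pi\log(2K/\delta)}{4n_{\min}}}.$$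
   Context: The per-class GREAT Score of class $k$ is the average of the local score $g$ over the samples whose ground-truth label is $k$; its population counterpart $\Omega_k$ is the expectation of $g$ under the class-conditional data distribution of class $k$. The Robustness Disparity Index (RDI) is the range (maximum minus minimum) of the per-class scores. *)

theory Defs
  imports "HOL-Probability.Probability"
begin

text \<open>Classes are indexed by 0..<K. Logit / score vectors are functions nat => real
  (only the entries below K are meaningful).\<close>

definition sigmoid_act :: "nat \<Rightarrow> (nat \<Rightarrow> real) \<Rightarrow> (nat \<Rightarrow> real)" where
  "sigmoid_act K v = (\<lambda>j. 1 / (1 + exp (- v j)))"

definition softmax_act :: "nat \<Rightarrow> real \<Rightarrow> (nat \<Rightarrow> real) \<Rightarrow> (nat \<Rightarrow> real)" where
  "softmax_act K T v = (\<lambda>j. exp (v j / T) / (\<Sum>l<K. exp (v l / T)))"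

definition gscore ::
  "nat \<Rightarrow> ((nat \<Rightarrow> real) \<Rightarrow> (nat \<Rightarrow> real)) \<Rightarrow> ('x \<Rightarrow> (nat \<Rightarrow> real)) \<Rightarrow> 'x \<Rightarrow> nat \<Rightarrow> real" where
  "gscore K \<sigma> f x y =
     sqrt (pi / 2) * max (\<sigma> (f x) y - Max ((\<lambda>j. \<sigma> (f x) j) ` ({..<K} - {y}))) 0"

definition Omega ::
  "nat \<Rightarrow> ((nat \<Rightarrow> real) \<Rightarrow> (nat \<Rightarrow> real)) \<Rightarrow> ('x \<Rightarrow> (nat \<Rightarrow> real)) \<Rightarrow> (nat \<Rightarrow> 'x measure) \<Rightarrow> nat \<Rightarrow> real" where
  "Omega K \<sigma> f D k = (\<integral>x. gscore K \<sigma> f x k \<partial>D k)"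

definition Omega_hat ::
  "nat \<Rightarrow> ((nat \<Rightarrow> real) \<Rightarrow> (nat \<Rightarrow> real)) \<Rightarrow> ('x \<Rightarrow> (nat \<Rightarrow> real)) \<Rightarrow> (nat \<Rightarrow> nat)
     \<Rightarrow> (nat \<Rightarrow> nat \<Rightarrow> 'a \<Rightarrow> 'x) \<Rightarrow> 'a \<Rightarrow> nat \<Rightarrow> real" where
  "Omega_hat K \<sigma> f n X \<omega> k = (\<Sum>i<n k. gscore K \<sigma> f (X k i \<omega>) k) / real (n k)"

definition RDI :: "nat \<Rightarrow> (nat \<Rightarrow> real) \<Rightarrow> real" where
  "RDI K s = Max (s ` {..<K}) - Min (s ` {..<K})"

end

theory Submission imports Defs begin

lemma act_bounds:
  assumes act: "\<sigma> = sigmoid_act K \<or> (\<exists>T>0. \<sigma> = softmax_act K T)" and j: "j < K"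
  shows "0 \<le> \<sigma> v j \<and> \<sigma> v j \<le> 1"
  using act
proof
  assume "\<sigma> = sigmoid_act K"
  then show ?thesis by (simp add: sigmoid_act_def add_pos_pos)
next
  assume "\<exists>T>0. \<sigma> = softmax_act K T"
  then obtain T where T: "\<sigma> = softmax_act K T" by blast
  have le: "exp (v j / T) \<le> (\<Sum>l<K. exp (v l / T))"
    using j by (intro member_le_sum) auto
  have "0 < exp (v j / T)" by simp
  then have pos: "0 < (\<Sum>l<K. exp (v l / T))" using le by linarith
  show ?thesis using le pos by (simp add: T softmax_act_def divide_le_eq)
qed

lemma gscore_bounds:
  assumes K2: "K \<ge> 2" and act: "\<sigma> = sigmoid_act K \<or> (\<exists>T>0. \<sigma> = softmax_act K T)" and k: "k < K"
  shows "0 \<le> gscore K \<sigma> f x k \<and> gscore K \<sigma> f x k \<le> sqrt (pi / 2)"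
proof -
  let ?S = "(\<lambda>j. \<sigma> (f x) j) ` ({..<K} - {k})"
  obtain j where j: "j < K" "j \<noteq> k"
  proof (cases "k = 0")
    case True then show thesis using that[of 1] K2 by auto
  next
    case False then show thesis using that[of 0] k by auto
  qed
  have "\<sigma> (f x) j \<in> ?S" using j by auto
  moreover have "finite ?S" by auto
  ultimately have "\<sigma> (f x) j \<le> Max ?S" by (rule Max_ge[rotated])
  moreover have "0 \<le> \<sigma> (f x) j" "\<sigma> (f x) k \<le> 1" using act_bounds[OF act] j k by auto
  ultimately have "max (\<sigma> (f x) k - Max ?S) 0 \<le> 1" by linarith
  then have "sqrt (pi/2) * max (\<sigma> (f x) k - Max ?S) 0 \<le> sqrt (pi/2) * 1"
    by (intro mult_left_mono) auto
  then show ?thesis by (simp add: gscore_def)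
qed


lemma per_class:
  fixes K :: nat and f :: "'x \<Rightarrow> (nat \<Rightarrow> real)" and \<sigma> :: "(nat \<Rightarrow> real) \<Rightarrow> (nat \<Rightarrow> real)"
    and D :: "nat \<Rightarrow> 'x measure" and M :: "'a measure"
    and n :: "nat \<Rightarrow> nat" and X :: "nat \<Rightarrow> nat \<Rightarrow> 'a \<Rightarrow> 'x" and t :: real
  assumes K2: "K \<ge> 2"
    and act: "\<sigma> = sigmoid_act K \<or> (\<exists>T>0. \<sigma> = softmax_act K T)"
    and g_meas: "(\<lambda>x. gscore K \<sigma> f x k) \<in> borel_measurable (D k)"
    and M_prob: "prob_space M"
    and n_pos: "n k \<ge> 1"
    and X_meas: "\<And>i. i < n k \<Longrightarrow> X k i \<in> measurable M (D k)"
    and X_distr: "\<And>i. i < n k \<Longrightarrow> distr M (D k) (X k i) = D k"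
    and X_indep: "prob_space.indep_vars M (\<lambda>_. D k) (X k) {..<n k}"
    and k: "k < K" and t: "t \<ge> 0"
  shows "measure M {\<omega> \<in> space M. \<bar>Omega_hat K \<sigma> f n X \<omega> k - Omega K \<sigma> f D k\<bar> \<ge> t}
          \<le> 2 * exp (- 4 * real (n k) * t\<^sup>2 / pi)"
proof -
  interpret prob_space M by (rule M_prob)
  define g where "g = (\<lambda>x. gscore K \<sigma> f x k)"
  define Z where "Z = (\<lambda>i \<omega>. g (X k i \<omega>))"
  define Y where "Y = Z 0"
  have n0: "0 < n k" using n_pos by simp
  have gm: "g \<in> borel_measurable (D k)" using g_meas by (simp add: g_def)
  have Zm: "Z i \<in> borel_measurable M" if "i < n k" for i
    unfolding Z_def using measurable_comp[OF X_meas[OF that] gm] by (simp add: comp_def)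
  have dZ: "distr M borel (Z i) = distr (D k) borel g" if "i < n k" for i
  proof -
    have "distr (distr M (D k) (X k i)) borel g = distr M borel (g \<circ> X k i)"
      by (rule distr_distr[OF gm X_meas[OF that]])
    then show ?thesis using X_distr[OF that] by (simp add: Z_def comp_def)
  qed
  have EY: "expectation Y = Omega K \<sigma> f D k"
  proof -
    have "integral\<^sup>L (distr M (D k) (X k 0)) g = (\<integral>x. g (X k 0 x) \<partial>M)"
      by (rule integral_distr[OF X_meas[OF n0] gm])
    then show ?thesis using X_distr[OF n0] by (simp add: Y_def Z_def Omega_def g_def)
  qed
  have bnd: "0 \<le> g x \<and> g x \<le> sqrt (pi / 2)" for x
    unfolding g_def by (rule gscore_bounds[OF K2 act k])
  interpret H: Hoeffding_ineq_iid M "{..<n k}" Z Y 0 "sqrt (pi/2)" "expectation Y"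
  proof unfold_locales
    show "finite {..<n k}" by simp
    show "indep_vars (\<lambda>_. borel) Z {..<n k}"
      unfolding Z_def by (rule indep_vars_compose2[OF X_indep]) (use gm in simp)
    show "distr M borel (Z i) = distr M borel Y" if "i \<in> {..<n k}" for i
      using dZ that n0 by (simp add: Y_def)
    show "random_variable borel Y" using Zm n0 by (simp add: Y_def)
    show "AE x in M. Y x \<in> {0..sqrt (pi / 2)}"
      using bnd by (intro AE_I2) (simp add: Y_def Z_def)
  qed simp
  have "prob {x\<in>space M. \<bar>(\<Sum>i\<in>{..<n k}. Z i x) / real (card {..<n k}) - expectation Y\<bar> \<ge> t} \<le>
               2 * exp (-2 * real (card {..<n k}) * t\<^sup>2 / (sqrt (pi/2) - 0)\<^sup>2)"
    by (rule H.Hoeffding_ineq_abs_ge') (use t n0 in auto)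
  moreover have "-2 * real (n k) * t\<^sup>2 / (sqrt (pi/2) - 0)\<^sup>2 = - 4 * real (n k) * t\<^sup>2 / pi"
    by (simp add: field_simps)
  ultimately show ?thesis
    by (simp add: EY Omega_hat_def Z_def g_def mult.assoc)
qed

lemma max_close:
  fixes a b :: "nat \<Rightarrow> real"
  assumes K: "0 < K" and h: "\<And>k. k < K \<Longrightarrow> \<bar>a k - b k\<bar> \<le> t"
  shows "\<bar>Max (a ` {..<K}) - Max (b ` {..<K})\<bar> \<le> t \<and> \<bar>Min (a ` {..<K}) - Min (b ` {..<K})\<bar> \<le> t"
proof -
  have ne: "{..<K} \<noteq> {}" using K by auto
  have "Max (a ` {..<K}) \<in> a ` {..<K}" by (rule Max_in) (use ne in auto)
  then obtain i where i: "i < K" "Max (a ` {..<K}) = a i" by auto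
  have "Max (b ` {..<K}) \<in> b ` {..<K}" by (rule Max_in) (use ne in auto)
  then obtain j where j: "j < K" "Max (b ` {..<K}) = b j" by auto
  have "Min (a ` {..<K}) \<in> a ` {..<K}" by (rule Min_in) (use ne in auto)
  then obtain i' where i': "i' < K" "Min (a ` {..<K}) = a i'" by auto
  have "Min (b ` {..<K}) \<in> b ` {..<K}" by (rule Min_in) (use ne in auto)
  then obtain j' where j': "j' < K" "Min (b ` {..<K}) = b j'" by auto
  have "b i \<le> b j" using j i by (metis Max_ge finite_imageI finite_lessThan imageI lessThan_iff)
  moreover have "a j \<le> a i" using j i by (metis Max_ge finite_imageI finite_lessThan imageI lessThan_iff)
  moreover have "b j' \<le> b i'" using j' i' by (metis Min_le finite_imageI finite_lessThan imageI lessThan_iff)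
  moreover have "a i' \<le> a j'" using j' i' by (metis Min_le finite_imageI finite_lessThan imageI lessThan_iff)
  moreover have "\<bar>a i - b i\<bar> \<le> t" "\<bar>a j - b j\<bar> \<le> t" "\<bar>a i' - b i'\<bar> \<le> t" "\<bar>a j' - b j'\<bar> \<le> t"
    using h i j i' j' by auto
  ultimately show ?thesis using i j i' j' by (simp add: abs_le_iff)
qed

lemma rdi_close:
  fixes a b :: "nat \<Rightarrow> real"
  assumes K: "0 < K" and h: "\<And>k. k < K \<Longrightarrow> \<bar>a k - b k\<bar> \<le> t"
  shows "\<bar>RDI K a - RDI K b\<bar> \<le> 2 * t"
proof -
  have "\<bar>Max (a ` {..<K}) - Max (b ` {..<K})\<bar> \<le> t \<and> \<bar>Min (a ` {..<K}) - Min (b ` {..<K})\<bar> \<le> t"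
    by (rule max_close[OF K]) (rule h)
  then show ?thesis unfolding RDI_def by (simp add: abs_le_iff)
qed

theorem proposition2:
  fixes K :: nat and f :: "'x \<Rightarrow> (nat \<Rightarrow> real)" and \<sigma> :: "(nat \<Rightarrow> real) \<Rightarrow> (nat \<Rightarrow> real)"
    and D :: "nat \<Rightarrow> 'x measure" and M :: "'a measure"
    and n :: "nat \<Rightarrow> nat" and X :: "nat \<Rightarrow> nat \<Rightarrow> 'a \<Rightarrow> 'x" and \<delta> :: real
  assumes K2: "K \<ge> 2"
    and act: "\<sigma> = sigmoid_act K \<or> (\<exists>T>0. \<sigma> = softmax_act K T)"
    and D_prob: "\<And>k. k < K \<Longrightarrow> prob_space (D k)"
    and g_meas: "\<And>k. k < K \<Longrightarrow> (\<lambda>x. gscore K \<sigma> f x k) \<in> borel_measurable (D k)"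
    and M_prob: "prob_space M"
    and n_pos: "\<And>k. k < K \<Longrightarrow> n k \<ge> 1"
    and X_meas: "\<And>k i. k < K \<Longrightarrow> i < n k \<Longrightarrow> X k i \<in> measurable M (D k)"
    and X_distr: "\<And>k i. k < K \<Longrightarrow> i < n k \<Longrightarrow> distr M (D k) (X k i) = D k"
    and X_indep: "\<And>k. k < K \<Longrightarrow> prob_space.indep_vars M (\<lambda>_. D k) (X k) {..<n k}"
    and \<delta>: "0 < \<delta>" "\<delta> < 1"
  shows "measure M {\<omega> \<in> space M.
           \<bar>RDI K (Omega_hat K \<sigma> f n X \<omega>) - RDI K (Omega K \<sigma> f D)\<bar>
             \<le> 2 * sqrt (pi * ln (2 * real K / \<delta>) / (4 * real (Min (n ` {..<K}))))}
         \<ge> 1 - \<delta>"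
proof -
  interpret prob_space M by (rule M_prob)
  define nm where "nm = Min (n ` {..<K})"
  define L where "L = ln (2 * real K / \<delta>)"
  define t where "t = sqrt (pi * L / (4 * real nm))"
  have K0: "0 < K" using K2 by simp
  have ne: "{..<K} \<noteq> {}" using K0 by auto
  have "nm \<in> n ` {..<K}" unfolding nm_def by (rule Min_in) (use ne in auto)
  then obtain k0 where k0: "k0 < K" "nm = n k0" by auto
  have nm1: "nm \<ge> 1" using k0 n_pos by simp
  have nmle: "nm \<le> n k" if "k < K" for k
    unfolding nm_def using that by (intro Min_le) auto
  have "1 < 2 * real K / \<delta>" using \<delta> K2 by (simp add: field_simps)
  then have L0: "0 < L" unfolding L_def by simp
  have t0: "0 \<le> t" unfolding t_def using L0 nm1 by simp
  have t2: "t\<^sup>2 = pi * L / (4 * real nm)" unfolding t_def using L0 nm1 by simp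
  have expL: "exp (- L) = \<delta> / (2 * real K)"
    unfolding L_def using \<delta> K0 by (simp add: exp_minus ln_div exp_diff)
  define B where "B = (\<lambda>k. {\<omega> \<in> space M. \<bar>Omega_hat K \<sigma> f n X \<omega> k - Omega K \<sigma> f D k\<bar> \<ge> t})"
  have OHm: "(\<lambda>\<omega>. Omega_hat K \<sigma> f n X \<omega> k) \<in> borel_measurable M" if "k < K" for k
  proof -
    have "(\<lambda>\<omega>. gscore K \<sigma> f (X k i \<omega>) k) \<in> borel_measurable M" if "i < n k" for i
      using measurable_comp[OF X_meas[OF \<open>k < K\<close> that] g_meas[OF \<open>k < K\<close>]] by (simp add: comp_def)
    then show ?thesis unfolding Omega_hat_def by (intro borel_measurable_divide borel_measurable_sum) auto
  qed
  have Bm: "B k \<in> sets M" if "k < K" for k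
    unfolding B_def using OHm[OF that] by measurable
  have PB: "prob (B k) \<le> \<delta> / real K" if k: "k < K" for k
  proof -
    have "prob (B k) \<le> 2 * exp (- 4 * real (n k) * t\<^sup>2 / pi)"
      unfolding B_def
      by (rule per_class[where K=K and \<sigma>=\<sigma> and f=f and D=D and M=M and n=n and X=X and k=k and t=t, OF K2 act g_meas[OF k] M_prob n_pos[OF k] X_meas[OF k] X_distr[OF k] X_indep[OF k] k t0])
    also have "- 4 * real (n k) * t\<^sup>2 / pi = - (real (n k) / real nm) * L"
      using t2 nm1 by (simp add: field_simps)
    also have "exp (- (real (n k) / real nm) * L) \<le> exp (- L)"
    proof -
      have "1 \<le> real (n k) / real nm" using nmle[OF k] nm1 by simp
      then have "1 * L \<le> (real (n k) / real nm) * L" using L0 by (intro mult_right_mono) auto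
      then show ?thesis by simp
    qed
    finally show ?thesis using expL K0 by (simp add: field_simps)
  qed
  have PU: "prob (\<Union>k\<in>{..<K}. B k) \<le> \<delta>"
  proof -
    have "prob (\<Union>k\<in>{..<K}. B k) \<le> (\<Sum>k\<in>{..<K}. prob (B k))"
      by (rule measure_UNION_le) (auto intro: Bm)
    also have "\<dots> \<le> (\<Sum>k\<in>{..<K}. \<delta> / real K)"
      by (rule sum_mono) (use PB in auto)
    also have "\<dots> = \<delta>" using K0 by simp
    finally show ?thesis .
  qed
  define G where "G = {\<omega> \<in> space M.
           \<bar>RDI K (Omega_hat K \<sigma> f n X \<omega>) - RDI K (Omega K \<sigma> f D)\<bar> \<le> 2 * t}"
  have Gm: "G \<in> sets M"
  proof -
    have "(\<lambda>\<omega>. RDI K (Omega_hat K \<sigma> f n X \<omega>)) \<in> borel_measurable M"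
      unfolding RDI_def
      by (intro borel_measurable_diff borel_measurable_Max borel_measurable_Min) (auto intro: OHm)
    then show ?thesis unfolding G_def by measurable
  qed
  have sub: "space M - (\<Union>k\<in>{..<K}. B k) \<subseteq> G"
  proof
    fix \<omega> assume w: "\<omega> \<in> space M - (\<Union>k\<in>{..<K}. B k)"
    then have "\<bar>Omega_hat K \<sigma> f n X \<omega> k - Omega K \<sigma> f D k\<bar> \<le> t" if "k < K" for k
      using that by (force simp: B_def not_le)
    then have "\<bar>RDI K (Omega_hat K \<sigma> f n X \<omega>) - RDI K (Omega K \<sigma> f D)\<bar> \<le> 2 * t"
      by (rule rdi_close[OF K0])
    then show "\<omega> \<in> G" using w by (simp add: G_def)
  qed
  have "1 - \<delta> \<le> 1 - prob (\<Union>k\<in>{..<K}. B k)" using PU by simp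
  also have "\<dots> = prob (space M - (\<Union>k\<in>{..<K}. B k))"
    by (rule prob_compl[symmetric]) (auto intro: Bm)
  also have "\<dots> \<le> prob G"
    by (rule finite_measure_mono[OF sub Gm])
  finally show ?thesis unfolding G_def t_def L_def nm_def .
qed

end
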